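(* Let $(X,d)$ be a complete metric space, let $\alpha\in[0,1)$, and let $F:(0,\infty)\to\mathbb{R}$ be a function having a finite right limit $F(t+0):=\lim_{s\to t^+}F(s)$ at every $t>0$. Suppose $T:X\to X$ satisfies, for all $x,y\in X$ with $Tx\neq Ty$, $F(d(Tx,Ty))\le\alpha F(d(x,y))$. Assume further: $(C_1')$ for $t,s\in(0,\infty)$, $t\le s$ implies $\alpha F(t)<F(s)$; and $(C_2')$ $F(t+0)>0$ for every $t\in(0,\infty)$. Then $T$ is a Picard operator.
   Context: $T$ is a Picard operator if $T$ has a unique fixed point $u\in X$ and for every $x\in X$ the sequence $(T^nx)_{n\in\mathbb{N}}$ converges to $u$. *)

theory Defs
  imports "HOL-Analysis.Analysis"
begin

definition picard_operator :: "('a::metric_space \<Rightarrow> 'a) \<Rightarrow> bool" where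
  "picard_operator T \<longleftrightarrow>
     (\<exists>!u. T u = u) \<and> (\<forall>u x. T u = u \<longrightarrow> (\<lambda>n. (T ^^ n) x) \<longlonglongrightarrow> u)"

definition right_lim :: "(real \<Rightarrow> real) \<Rightarrow> real \<Rightarrow> real" where
  "right_lim F t = Lim (at_right t) F"

end

theory Submission
  imports Defs
begin

theorem mainTheorem9:
  fixes T :: "'a::complete_space \<Rightarrow> 'a"
    and F :: "real \<Rightarrow> real"
    and \<alpha> :: real
  assumes alpha: "0 \<le> \<alpha>" "\<alpha> < 1"
    and rlim: "\<forall>t>0. \<exists>L. (F \<longlongrightarrow> L) (at_right t)"
    and contr: "\<forall>x y. T x \<noteq> T y \<longrightarrow> F (dist (T x) (T y)) \<le> \<alpha> * F (dist x y)"
    and C1: "\<forall>t s. 0 < t \<and> 0 < s \<and> t \<le> s \<longrightarrow> \<alpha> * F t < F s"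
    and C2: "\<forall>t>0. right_lim F t > 0"
  shows "picard_operator T"
proof -
  have strict: "dist (T x) (T y) < dist x y" if "x \<noteq> y" for x y
  proof (cases "T x = T y")
    case True then show ?thesis using that by simp
  next
    case False
    have "x \<noteq> y" using that .
    show ?thesis
    proof (rule ccontr)
      assume "\<not> ?thesis"
      hence "\<alpha> * F (dist x y) < F (dist (T x) (T y))"
        using C1 that False by auto
      then show False using contr False by force
    qed
  qed
  have nonexp: "dist (T x) (T y) \<le> dist x y" for x y
    using strict[of x y] by (cases "x = y") auto
  have key: "\<exists>\<eta>>0. \<eta> \<le> \<epsilon> \<and> (\<forall>x y::'a. dist x y < \<epsilon> + \<eta> \<longrightarrow> dist (T x) (T y) \<le> \<epsilon>)"
    if eps: "\<epsilon> > 0" for \<epsilon>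
  proof -
    obtain L where L: "(F \<longlongrightarrow> L) (at_right \<epsilon>)" using rlim eps by blast
    have "right_lim F \<epsilon> = L" unfolding right_lim_def
      using L by (simp add: tendsto_Lim trivial_limit_at_right_real)
    hence Lpos: "L > 0" using C2 eps by auto
    define \<theta> where "\<theta> = (1 - \<alpha>) * L / 2"
    have th: "\<theta> > 0" using Lpos alpha by (simp add: \<theta>_def)
    have "eventually (\<lambda>s. dist (F s) L < \<theta>) (at_right \<epsilon>)"
      using L th by (simp add: tendsto_iff)
    then obtain b where b: "b > \<epsilon>" and bP: "\<forall>s>\<epsilon>. s < b \<longrightarrow> dist (F s) L < \<theta>"
      by (auto simp: eventually_at_right_field)
    define \<eta> where "\<eta> = min (b - \<epsilon>) \<epsilon>"
    have eq: "L - \<theta> - \<alpha> * (L + \<theta>) = (1 - \<alpha>)^2 * L / 2"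
      by (simp add: \<theta>_def power2_eq_square field_simps; algebra)
    have pos2: "(1 - \<alpha>)^2 * L / 2 > 0" using alpha Lpos by simp
    have sep: "\<alpha> * F c < F a" if "\<epsilon> < a" "a < b" "\<epsilon> < c" "c < b" for a c
    proof -
      have "F a > L - \<theta>" using bP that by (auto simp: dist_real_def)
      moreover have "F c < L + \<theta>" using bP that by (auto simp: dist_real_def)
      hence "\<alpha> * F c \<le> \<alpha> * (L + \<theta>)" using alpha by (simp add: mult_left_mono)
      ultimately show ?thesis using eq pos2 by linarith
    qed
    show ?thesis
    proof (intro exI[of _ \<eta>] conjI allI impI)
      show "\<eta> > 0" using b eps by (simp add: \<eta>_def)
      show "\<eta> \<le> \<epsilon>" by (simp add: \<eta>_def)
      fix x y :: 'a assume xy: "dist x y < \<epsilon> + \<eta>"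
      show "dist (T x) (T y) \<le> \<epsilon>"
      proof (rule ccontr)
        assume "\<not> ?thesis"
        hence g: "dist (T x) (T y) > \<epsilon>" by simp
        hence ne: "T x \<noteq> T y" using eps by auto
        hence "x \<noteq> y" by auto
        hence lt: "dist (T x) (T y) < dist x y" using strict by blast
        have "dist x y < b" using xy by (simp add: \<eta>_def)
        hence "\<alpha> * F (dist x y) < F (dist (T x) (T y))"
          using sep[of "dist (T x) (T y)" "dist x y"] g lt by linarith
        then show False using contr ne by force
      qed
    qed
  qed
  have conv: "\<exists>u. T u = u \<and> (\<lambda>n. (T ^^ n) x0) \<longlonglongrightarrow> u" for x0
  proof -
    define x where "x n = (T ^^ n) x0" for n
    have xS: "x (Suc n) = T (x n)" for n by (simp add: x_def)
    define d where "d n = dist (x n) (x (Suc n))" for n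
    have dmono: "d (n + k) \<le> d n" for n k
    proof (induction k)
      case 0 then show ?case by simp
    next
      case (Suc k)
      have "d (n + Suc k) \<le> d (n + k)" unfolding d_def using nonexp xS by simp
      then show ?case using Suc by simp
    qed
    have small: "\<exists>n. d n < e" if "e > 0" for e
    proof -
      define \<delta> where "\<delta> = Inf (range d)"
      have bdd: "bdd_below (range d)" by (auto simp: d_def intro!: bdd_belowI[of _ 0])
      have low: "\<delta> \<le> d n" for n unfolding \<delta>_def using bdd by (simp add: cInf_lower)
      have "\<delta> \<le> 0"
      proof (rule ccontr)
        assume "\<not> ?thesis"
        hence dp: "\<delta> > 0" by simp
        obtain \<eta> where eta: "\<eta> > 0" "\<forall>x y. dist x y < \<delta> + \<eta> \<longrightarrow> dist (T x) (T y) \<le> \<delta>"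
          using key[OF dp] by blast
        have "Inf (range d) < \<delta> + \<eta>" using eta \<delta>_def by simp
        then obtain n where n: "d n < \<delta> + \<eta>" by (auto simp: cInf_less_iff[OF _ bdd])
        have "d (Suc n) \<le> \<delta>" using eta(2) n unfolding d_def by (simp add: xS)
        hence e1: "d (Suc n) = \<delta>" using low[of "Suc n"] by simp
        hence "x (Suc n) \<noteq> x (Suc (Suc n))" using dp by (auto simp: d_def)
        hence "d (Suc (Suc n)) < d (Suc n)" unfolding d_def using strict by (simp add: xS)
        then show False using e1 low[of "Suc (Suc n)"] by simp
      qed
      hence "Inf (range d) < e" using that \<delta>_def by simp
      then show ?thesis by (auto simp: cInf_less_iff[OF _ bdd])
    qed
    have cauchy: "Cauchy x"
    proof (rule metric_CauchyI)
      fix e :: real assume e: "e > 0"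
      define \<epsilon> where "\<epsilon> = e / 4"
      have ep: "\<epsilon> > 0" using e by (simp add: \<epsilon>_def)
      obtain \<eta> where eta: "\<eta> > 0" "\<eta> \<le> \<epsilon>" "\<forall>x y. dist x y < \<epsilon> + \<eta> \<longrightarrow> dist (T x) (T y) \<le> \<epsilon>"
        using key[OF ep] by blast
      obtain N where N: "d N < \<eta> / 2" using small[of "\<eta> / 2"] eta(1) by auto
      have inv: "dist (x N) (x (N + k)) \<le> \<epsilon> + \<eta> / 2" for k
      proof (induction k)
        case 0 then show ?case using ep eta by simp
      next
        case (Suc k)
        have "dist (x N) (x (N + k)) < \<epsilon> + \<eta>" using Suc eta by simp
        hence "dist (x (Suc N)) (x (Suc (N + k))) \<le> \<epsilon>" using eta(3) by (simp add: xS)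
        moreover have "dist (x N) (x (Suc (N + k))) \<le> d N + dist (x (Suc N)) (x (Suc (N + k)))"
          unfolding d_def by (rule dist_triangle)
        ultimately show ?case using N by simp
      qed
      have "dist (x m) (x n) < e" if mN: "m \<ge> N" and nN: "n \<ge> N" for m n
      proof -
        obtain k where k: "m = N + k" using le_Suc_ex[OF mN] by blast
        obtain j where j: "n = N + j" using le_Suc_ex[OF nN] by blast
        have "dist (x m) (x n) \<le> dist (x N) (x m) + dist (x N) (x n)"
          by (rule dist_triangle3)
        also have "\<dots> \<le> 2 * (\<epsilon> + \<eta> / 2)" 
        proof -
          have a: "dist (x N) (x m) \<le> \<epsilon> + \<eta> / 2" using inv[of k] k by simp
          have b: "dist (x N) (x n) \<le> \<epsilon> + \<eta> / 2" using inv[of j] j by simp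
          have "2 * (\<epsilon> + \<eta> / 2) = (\<epsilon> + \<eta> / 2) + (\<epsilon> + \<eta> / 2)" by simp
          with add_mono[OF a b] show ?thesis by simp
        qed
        also have "\<dots> < e"
        proof -
          have "e = 4 * \<epsilon>" by (simp add: \<epsilon>_def)
          moreover have "2 * (\<epsilon> + \<eta> / 2) = 2 * \<epsilon> + \<eta>" by simp
          ultimately show ?thesis using eta(2) ep by linarith
        qed
        finally show ?thesis .
      qed
      then show "\<exists>M. \<forall>m\<ge>M. \<forall>n\<ge>M. dist (x m) (x n) < e" by blast
    qed
    then obtain u where u: "x \<longlonglongrightarrow> u" using Cauchy_convergent convergent_def by blast
    have "(\<lambda>n. x (Suc n)) \<longlonglongrightarrow> u" using u by (rule LIMSEQ_Suc)
    moreover have "(\<lambda>n. x (Suc n)) \<longlonglongrightarrow> T u"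
      unfolding xS lim_sequentially
    proof (intro allI impI)
      fix e :: real assume "e > 0"
      then obtain N where "\<forall>n\<ge>N. dist (x n) u < e" using u lim_sequentially by blast
      then have "\<forall>n\<ge>N. dist (T (x n)) (T u) < e" using nonexp le_less_trans by blast
      then show "\<exists>N. \<forall>n\<ge>N. dist (T (x n)) (T u) < e" by blast
    qed
    ultimately have "T u = u" using LIMSEQ_unique by blast
    moreover have "x = (\<lambda>n. (T ^^ n) x0)" by (simp add: x_def fun_eq_iff)
    ultimately show ?thesis using u by auto
  qed
  have uniq: "u = v" if "T u = u" "T v = v" for u v
    using strict[of u v] that by auto
  obtain u where "T u = u" using conv by blast
  then have ex: "\<exists>!u. T u = u" using uniq by blast
  have "\<forall>u x. T u = u \<longrightarrow> (\<lambda>n. (T ^^ n) x) \<longlonglongrightarrow> u"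
  proof (intro allI impI)
    fix u x assume fu: "T u = u"
    obtain v where "T v = v" "(\<lambda>n. (T ^^ n) x) \<longlonglongrightarrow> v" using conv by blast
    then show "(\<lambda>n. (T ^^ n) x) \<longlonglongrightarrow> u" using uniq[OF fu] by simp
  qed
  then show ?thesis unfolding picard_operator_def using ex by blast
qed

end
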